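(* Let $G$ be a finite graph with vertices $v_1,\ldots,v_n$, and let $H$ be obtained from $G$ by substituting complete graphs for the vertices of $G$; that is, $V(H)=C_1\cup\cdots\cup C_n$ is a partition into non-empty sets, each $C_i$ induces a complete graph in $H$, and for distinct $i,j$ and $x\in C_i$, $y\in C_j$ we have $xy\in E(H)$ if and only if $v_iv_j\in E(G)$. Then there is a one-to-one correspondence between the minimal chordal completions of $G$ and the minimal chordal completions of $H$.
   Context: A graph is chordal if it has no induced cycle of length at least four. A chordal completion of a graph $G=(V,E)$ is a chordal graph $G'=(V,E')$ with $E\subseteq E'$; it is minimal if no proper subgraph of $G'$ (on vertex set $V$) is a chordal completion of $G$. *)

theory Defs
  imports Main
begin

definition graph :: "'a set \<Rightarrow> 'a set set \<Rightarrow> bool" where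
  "graph V E \<longleftrightarrow> finite V \<and> E \<subseteq> {{x, y} | x y. x \<in> V \<and> y \<in> V \<and> x \<noteq> y}"

definition induced_cycle :: "'a set \<Rightarrow> 'a set set \<Rightarrow> 'a list \<Rightarrow> bool" where
  "induced_cycle V E xs \<longleftrightarrow> length xs \<ge> 4 \<and> distinct xs \<and> set xs \<subseteq> V \<and>
     (\<forall>i < length xs. \<forall>j < length xs. i \<noteq> j \<longrightarrow>
        ({xs ! i, xs ! j} \<in> E \<longleftrightarrow>
           (j = Suc i mod length xs \<or> i = Suc j mod length xs)))"

definition chordal :: "'a set \<Rightarrow> 'a set set \<Rightarrow> bool" where
  "chordal V E \<longleftrightarrow> \<not> (\<exists>xs. induced_cycle V E xs)"

definition chordal_completion :: "'a set \<Rightarrow> 'a set set \<Rightarrow> 'a set set \<Rightarrow> bool" where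
  "chordal_completion V E E' \<longleftrightarrow> graph V E' \<and> E \<subseteq> E' \<and> chordal V E'"

definition minimal_chordal_completion :: "'a set \<Rightarrow> 'a set set \<Rightarrow> 'a set set \<Rightarrow> bool" where
  "minimal_chordal_completion V E E' \<longleftrightarrow> chordal_completion V E E' \<and>
     \<not> (\<exists>E''. chordal_completion V E E'' \<and> E'' \<subset> E')"

end

theory Submission
  imports Defs
begin


lemma sucmod: "a < L \<Longrightarrow> Suc a mod L = (if Suc a = L then 0 else Suc a)"
  by (simp add: mod_Suc)

lemma cyc_of_fun:
  assumes L4: "4 \<le> L" and inj: "inj_on f {..<L}" and V: "\<forall>i<L. f i \<in> V'"
    and adj: "\<forall>i j. i<j \<and> j<L \<longrightarrow> ({f i, f j}\<in>E' \<longleftrightarrow> j = Suc i \<or> (i=0 \<and> j = L-1))"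
  shows "\<not> chordal V' E'"
proof -
  have "induced_cycle V' E' (map f [0..<L])"
    unfolding induced_cycle_def
  proof (intro conjI allI impI)
    show "4 \<le> length (map f [0..<L])" using L4 by simp
    show "distinct (map f [0..<L])" using inj by (simp add: distinct_map lessThan_atLeast0)
    show "set (map f [0..<L]) \<subseteq> V'" using V by auto
    fix i j assume i: "i < length (map f [0..<L])" and j: "j < length (map f [0..<L])" and ij: "i\<noteq>j"
    then have iL: "i<L" and jL: "j<L" by auto
    show "({map f [0..<L] ! i, map f [0..<L] ! j} \<in> E') = (j = Suc i mod length (map f [0..<L]) \<or> i = Suc j mod length (map f [0..<L]))"
    proof (cases "i<j")
      case True
      then show ?thesis using adj[rule_format, of i j] iL jL sucmod[OF iL] sucmod[OF jL] by auto
    next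
      case False
      then have "j < i" using ij by auto
      then show ?thesis using adj[rule_format, of j i] iL jL sucmod[OF iL] sucmod[OF jL]
        by (auto simp: insert_commute)
    qed
  qed
  then show ?thesis unfolding chordal_def by blast
qed

lemma cycE:
  assumes ch: "chordal V' E'"
    and pV: "\<forall>i. s\<le>i \<and> i \<le> e \<longrightarrow> p i \<in> V'" and yV: "y\<in>V'"
    and cons: "\<forall>i. s \<le> i \<and> i < e \<longrightarrow> {p i, p (Suc i)} \<in> E'"
    and chl: "\<forall>i j. s \<le> i \<and> Suc i < j \<and> j \<le> e \<longrightarrow> {p i, p j}\<notin>E'"
    and dis: "\<forall>i j. s\<le>i \<and> i<j \<and> j\<le>e \<longrightarrow> p i \<noteq> p j"
    and yn: "\<forall>i. s\<le>i \<and> i\<le>e \<longrightarrow> p i \<noteq> y"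
    and ys: "{y, p s}\<in>E'" and ye: "{y,p e}\<in>E'"
    and yi: "\<forall>i. s<i \<and> i<e \<longrightarrow> {y,p i}\<notin>E'"
    and se: "s+2 \<le> e"
  shows False
proof -
  define f where "f i = (if i = 0 then y else p (s+i-1))" for i
  define L where "L = e - s + 2"
  have "\<not> chordal V' E'"
  proof (rule cyc_of_fun[of L f])
    show "4 \<le> L" using se by (simp add: L_def)
    show "inj_on f {..<L}"
    proof -
      have "f a \<noteq> f b" if ab: "a<b" "b<L" for a b
      proof -
        have b1: "s \<le> s+b-1 \<and> s+b-1 \<le> e" using ab se by (auto simp: L_def)
        show ?thesis
        proof (cases "a=0")
          case True then show ?thesis using yn[rule_format, OF b1] ab by (auto simp: f_def)
        next
          case False
          then have a1: "s \<le> s+a-1 \<and> s+a-1 < s+b-1 \<and> s+b-1 \<le> e" using ab b1 by auto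
          then show ?thesis using dis[rule_format, OF a1] False ab by (auto simp: f_def)
        qed
      qed
      then show ?thesis unfolding inj_on_def by (metis lessThan_iff linorder_neqE_nat)
    qed
    show "\<forall>i<L. f i \<in> V'"
    proof (intro allI impI)
      fix i assume iL: "i<L"
      show "f i \<in> V'"
      proof (cases "i=0")
        case True then show ?thesis using yV by (simp add: f_def)
      next
        case False
        then have "s \<le> s+i-1 \<and> s+i-1 \<le> e" using iL se by (auto simp: L_def)
        then show ?thesis using pV False by (auto simp: f_def)
      qed
    qed
    show "\<forall>i j. i < j \<and> j < L \<longrightarrow> ({f i, f j} \<in> E') = (j = Suc i \<or> i = 0 \<and> j = L - 1)"
    proof (intro allI impI)
      fix i j assume ij: "i < j \<and> j < L"
      show "({f i, f j} \<in> E') = (j = Suc i \<or> i = 0 \<and> j = L - 1)"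
      proof (cases "i = 0")
        case True
        consider "j=1" | "j = L-1" | "1<j \<and> j<L-1" using ij by linarith
        then show ?thesis
        proof cases
          case 1 then show ?thesis using True ys by (simp add: f_def)
        next
          case 2
          then have "s + j - 1 = e" "j \<noteq> 0" using se by (auto simp: L_def)
          then show ?thesis using True ye 2 by (simp add: f_def)
        next
          case 3
          then have jj: "s < s+j-1 \<and> s+j-1 < e" using se by (auto simp: L_def)
          then show ?thesis using True 3 yi[rule_format, OF jj] by (auto simp: f_def)
        qed
      next
        case False
        have ii: "s \<le> s+i-1 \<and> s+i-1 < e" using ij False se by (auto simp: L_def)
        show ?thesis
        proof (cases "j = Suc i")
          case True
          then have "s + j - 1 = Suc (s+i-1)" using False by simp
          then show ?thesis using cons[rule_format, OF ii] True False by (simp add: f_def)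
        next
          case jn: False
          have jj: "s \<le> s+i-1 \<and> Suc (s+i-1) < s+j-1 \<and> s+j-1 \<le> e" using ij False jn se by (auto simp: L_def)
          then show ?thesis using chl[rule_format, OF jj] False jn ij by (auto simp: f_def)
        qed
      qed
    qed
  qed
  then show False using ch by simp
qed

lemma cycF:
  assumes ch: "chordal V' E'"
    and pV: "\<forall>i. s\<le>i \<and> i \<le> e \<longrightarrow> p i \<in> V'" and y1V: "y1\<in>V'" and y2V: "y2\<in>V'"
    and cons: "\<forall>i. s \<le> i \<and> i < e \<longrightarrow> {p i, p (Suc i)} \<in> E'"
    and chl: "\<forall>i j. s \<le> i \<and> Suc i < j \<and> j \<le> e \<longrightarrow> {p i, p j}\<notin>E'"
    and dis: "\<forall>i j. s\<le>i \<and> i<j \<and> j\<le>e \<longrightarrow> p i \<noteq> p j"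
    and y1n: "\<forall>i. s\<le>i \<and> i\<le>e \<longrightarrow> p i \<noteq> y1"
    and y2n: "\<forall>i. s\<le>i \<and> i\<le>e \<longrightarrow> p i \<noteq> y2"
    and y2s: "{y2, p s}\<in>E'" and y2i: "\<forall>i. s<i \<and> i\<le>e \<longrightarrow> {y2,p i}\<notin>E'"
    and y1e: "{y1, p e}\<in>E'" and y1i: "\<forall>i. s\<le>i \<and> i<e \<longrightarrow> {y1,p i}\<notin>E'"
    and y12: "{y1,y2}\<in>E'" and y12n: "y1 \<noteq> y2"
    and se: "s+1 \<le> e"
  shows False
proof -
  define f where "f i = (if i = 0 then y2 else if i \<le> e-s+1 then p (s+i-1) else y1)" for i
  define L where "L = e - s + 3"
  have "\<not> chordal V' E'"
  proof (rule cyc_of_fun[of L f])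
    show "4 \<le> L" using se by (simp add: L_def)
    show "inj_on f {..<L}"
    proof -
      have "f a \<noteq> f b" if ab: "a<b" "b<L" for a b
      proof (cases "b \<le> e-s+1")
        case True
        have b1: "s \<le> s+b-1 \<and> s+b-1 \<le> e" using ab se True by (auto simp: L_def)
        show ?thesis
        proof (cases "a=0")
          case True then show ?thesis using y2n[rule_format, OF b1] ab \<open>b \<le> e-s+1\<close> by (auto simp: f_def)
        next
          case False
          then have a1: "s \<le> s+a-1 \<and> s+a-1 < s+b-1 \<and> s+b-1 \<le> e" using ab b1 by auto
          then show ?thesis using dis[rule_format, OF a1] False ab \<open>b \<le> e-s+1\<close> by (auto simp: f_def)
        qed
      next
        case False
        then have fb: "f b = y1" using ab by (auto simp: f_def)
        show ?thesis
        proof (cases "a=0")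
          case True then show ?thesis using fb y12n by (auto simp: f_def)
        next
          case False
          then have a1: "s \<le> s+a-1 \<and> s+a-1 \<le> e" "a \<le> e-s+1" using ab se by (auto simp: L_def)
          then show ?thesis using y1n[rule_format, OF a1(1)] False fb by (auto simp: f_def)
        qed
      qed
      then show ?thesis unfolding inj_on_def by (metis lessThan_iff linorder_neqE_nat)
    qed
    show "\<forall>i<L. f i \<in> V'"
    proof (intro allI impI)
      fix i assume iL: "i<L"
      show "f i \<in> V'"
      proof (cases "i=0 \<or> \<not> i \<le> e-s+1")
        case True then show ?thesis using y1V y2V by (auto simp: f_def)
      next
        case False
        then have "s \<le> s+i-1 \<and> s+i-1 \<le> e" using iL se by (auto simp: L_def)
        then show ?thesis using pV False by (auto simp: f_def)
      qed
    qed
    show "\<forall>i j. i < j \<and> j < L \<longrightarrow> ({f i, f j} \<in> E') = (j = Suc i \<or> i = 0 \<and> j = L - 1)"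
    proof (intro allI impI)
      fix i j assume ij: "i < j \<and> j < L"
      show "({f i, f j} \<in> E') = (j = Suc i \<or> i = 0 \<and> j = L - 1)"
      proof (cases "i = 0")
        case True
        consider "j=1" | "j = L-1" | "1<j \<and> j<L-1" using ij by linarith
        then show ?thesis
        proof cases
          case 1 then show ?thesis using True y2s by (simp add: f_def)
        next
          case 2
          then have "\<not> j \<le> e-s+1" "j \<noteq> 0" using se by (auto simp: L_def)
          then show ?thesis using True y12 2 by (simp add: f_def insert_commute)
        next
          case 3
          then have jj: "s < s+j-1 \<and> s+j-1 \<le> e" "j \<le> e-s+1" using se by (auto simp: L_def)
          then show ?thesis using True 3 y2i[rule_format, OF jj(1)] by (auto simp: f_def)
        qed
      next
        case False
        show ?thesis
        proof (cases "j = L - 1")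
          case jL: True
          then have "j = e - s + 2" using se by (simp add: L_def)
          then have fj: "f j = y1" by (simp add: f_def)
          show ?thesis
          proof (cases "j = Suc i")
            case True
            then have "s + i - 1 = e" "i \<le> e-s+1" using jL se by (auto simp: L_def)
            then show ?thesis using fj y1e True \<open>i\<noteq>0\<close> by (simp add: f_def insert_commute)
          next
            case jn: False
            have ii: "s \<le> s+i-1 \<and> s+i-1 < e" "i \<le> e-s+1" using ij jn jL \<open>i\<noteq>0\<close> se by (auto simp: L_def)
            then show ?thesis using fj y1i[rule_format, OF ii(1)] jn jL \<open>i\<noteq>0\<close> ij by (auto simp: f_def insert_commute L_def)
          qed
        next
          case jL: False
          have ii: "s \<le> s+i-1 \<and> s+i-1 < e" "j \<le> e-s+1" "i \<le> e-s+1" using ij jL \<open>i\<noteq>0\<close> se by (auto simp: L_def)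
          show ?thesis
          proof (cases "j = Suc i")
            case True
            then have "s + j - 1 = Suc (s+i-1)" using \<open>i\<noteq>0\<close> by simp
            then show ?thesis using cons[rule_format, OF ii(1)] True \<open>i\<noteq>0\<close> ii by (simp add: f_def)
          next
            case jn: False
            have jj: "s \<le> s+i-1 \<and> Suc (s+i-1) < s+j-1 \<and> s+j-1 \<le> e" using ij \<open>i\<noteq>0\<close> jn ii by auto
            then show ?thesis using chl[rule_format, OF jj] \<open>i\<noteq>0\<close> jn ij ii by (auto simp: f_def)
          qed
        qed
      qed
    qed
  qed
  then show False using ch by simp
qed

definition walk :: "'b set set \<Rightarrow> (nat \<Rightarrow> 'b) \<Rightarrow> nat \<Rightarrow> 'b \<Rightarrow> 'b \<Rightarrow> 'b set \<Rightarrow> bool" where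
  "walk Ed p n a b R \<longleftrightarrow> p 0 = a \<and> p n = b \<and> (\<forall>i<n. {p i, p (Suc i)} \<in> Ed) \<and> (\<forall>i. 0<i \<and> i<n \<longrightarrow> p i \<in> R)"

lemma walk_short:
  assumes w: "walk Ed p n a b R" and d: "0<d" "i+d \<le> n"
    and l1: "i+d = n \<Longrightarrow> p i = b" and l2: "i+d < n \<Longrightarrow> {p i, p (Suc (i+d))} \<in> Ed"
  shows "walk Ed (\<lambda>k. p (if k \<le> i then k else k+d)) (n-d) a b R"
  unfolding walk_def
proof (intro conjI allI impI)
  show "p (if 0 \<le> i then 0 else 0 + d) = a" using w by (simp add: walk_def)
  show "p (if n - d \<le> i then n - d else n - d + d) = b"
  proof (cases "n - d \<le> i")
    case True
    then have "i + d = n" "n - d = i" using d by auto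
    then show ?thesis using True l1 by simp
  next
    case False then show ?thesis using w d by (auto simp: walk_def)
  qed
  fix k
  { assume k: "k < n - d"
    show "{p (if k \<le> i then k else k + d), p (if Suc k \<le> i then Suc k else Suc k + d)} \<in> Ed"
    proof (cases "Suc k \<le> i")
      case True then show ?thesis using w k d by (auto simp: walk_def)
    next
      case False
      show ?thesis
      proof (cases "k = i")
        case True then show ?thesis using l2 k by auto
      next
        case False
        then have "k + d < n" "\<not> k \<le> i" using k \<open>\<not> Suc k \<le> i\<close> by auto
        then show ?thesis using w \<open>\<not> Suc k \<le> i\<close> by (auto simp: walk_def)
      qed
    qed }
  { assume k: "0 < k \<and> k < n - d"
    show "p (if k \<le> i then k else k + d) \<in> R" using w k d by (auto simp: walk_def) }
qed

lemma min_walk: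
  assumes w: "walk Ed p n a b R" and mn: "\<forall>n'<n. \<not>(\<exists>q. walk Ed q n' a b R)"
  shows "\<forall>i j. Suc i < j \<and> j \<le> n \<longrightarrow> {p i, p j} \<notin> Ed"
    and "\<forall>i j. i < j \<and> j \<le> n \<longrightarrow> p i \<noteq> p j"
proof -
 show "\<forall>i j. Suc i < j \<and> j \<le> n \<longrightarrow> {p i, p j} \<notin> Ed"
 proof (intro allI impI)
  fix i j assume ij: "Suc i < j \<and> j \<le> n"
  show "{p i, p j} \<notin> Ed"
  proof
    assume e: "{p i, p j} \<in> Ed"
    have "walk Ed (\<lambda>k. p (if k \<le> i then k else k+(j-i-1))) (n-(j-i-1)) a b R"
      by (rule walk_short[OF w]) (use ij e in auto)
    moreover have "n - (j-i-1) < n" using ij by arith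
    ultimately show False using mn by blast
  qed
qed
 show "\<forall>i j. i < j \<and> j \<le> n \<longrightarrow> p i \<noteq> p j"
 proof (intro allI impI)
  fix i j assume ij: "i < j \<and> j \<le> n"
  show "p i \<noteq> p j"
  proof
    assume e: "p i = p j"
    have "walk Ed (\<lambda>k. p (if k \<le> i then k else k+(j-i))) (n-(j-i)) a b R"
    proof (rule walk_short[OF w])
      show "0 < j - i" "i + (j - i) \<le> n" using ij by auto
      show "p i = b" if "i + (j - i) = n" using that e w ij by (auto simp: walk_def)
      show "{p i, p (Suc (i + (j - i)))} \<in> Ed" if "i + (j - i) < n" using that e w ij by (auto simp: walk_def)
    qed
    moreover have "n - (j-i) < n" using ij by arith
    ultimately show False using mn by blast
  qed
 qed
qed



lemma edge_in: "graph X A \<Longrightarrow> {u,v}\<in>A \<Longrightarrow> u\<in>X \<and> v\<in>X \<and> u\<noteq>v"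
  unfolding graph_def by (auto simp: doubleton_eq_iff)

locale subst =
  fixes V :: "'a set" and E :: "'a set set"
    and W :: "'b set" and F :: "'b set set" and C :: "'a \<Rightarrow> 'b set"
  assumes gG: "graph V E" and gH: "graph W F"
    and ne: "\<forall>v\<in>V. C v \<noteq> {}"
    and cover: "\<Union> (C ` V) = W"
    and disj: "\<forall>u\<in>V. \<forall>v\<in>V. u \<noteq> v \<longrightarrow> C u \<inter> C v = {}"
    and clq: "\<forall>v\<in>V. \<forall>x\<in>C v. \<forall>y\<in>C v. x \<noteq> y \<longrightarrow> {x, y} \<in> F"
    and cross: "\<forall>u\<in>V. \<forall>v\<in>V. u \<noteq> v \<longrightarrow>
           (\<forall>x\<in>C u. \<forall>y\<in>C v. {x, y} \<in> F \<longleftrightarrow> {u, v} \<in> E)"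
begin

lemma cu: "u\<in>V \<Longrightarrow> v\<in>V \<Longrightarrow> x\<in>C u \<Longrightarrow> x\<in>C v \<Longrightarrow> u=v" using disj by blast
lemma CW: "v\<in>V \<Longrightarrow> x\<in>C v \<Longrightarrow> x\<in>W" using cover by blast
lemma Wcls: "x\<in>W \<Longrightarrow> \<exists>v\<in>V. x\<in>C v" using cover by blast

definition lift where
  "lift A = F \<union> {{x,y} | x y u v. {u,v}\<in>A \<and> u\<in>V \<and> v\<in>V \<and> x\<in>C u \<and> y\<in>C v}"
definition quo where
  "quo B = {{u,v} | u v. u\<in>V \<and> v\<in>V \<and> u\<noteq>v \<and> (\<forall>x\<in>C u. \<forall>y\<in>C v. {x,y}\<in>B)}"

lemma lift_char:
  assumes "E \<subseteq> A" "u\<in>V" "v\<in>V" "u\<noteq>v" "x\<in>C u" "y\<in>C v"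
  shows "{x,y}\<in>lift A \<longleftrightarrow> {u,v}\<in>A"
proof
  assume "{u,v}\<in>A" thus "{x,y}\<in>lift A" using assms unfolding lift_def by blast
next
  assume "{x,y}\<in>lift A"
  then consider "{x,y}\<in>F" | u' v' x' y' where "{x,y} = {x',y'}" "{u',v'}\<in>A" "u'\<in>V" "v'\<in>V" "x'\<in>C u'" "y'\<in>C v'"
    unfolding lift_def by blast
  then show "{u,v}\<in>A"
  proof cases
    case 1 then show ?thesis using cross assms by blast
  next
    case 2
    from 2(1) have "(x=x' \<and> y=y') \<or> (x=y' \<and> y=x')" by (auto simp: doubleton_eq_iff)
    then show ?thesis
    proof
      assume "x=x' \<and> y=y'" then have "u=u'" "v=v'" using cu 2 assms by metis+
      then show ?thesis using 2 by simp
    next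
      assume "x=y' \<and> y=x'" then have "u=v'" "v=u'" using cu 2 assms by metis+
      then show ?thesis using 2 by (simp add: insert_commute)
    qed
  qed
qed

lemma lift_mono: "A \<subseteq> A' \<Longrightarrow> lift A \<subseteq> lift A'" unfolding lift_def by blast
lemma F_lift: "F \<subseteq> lift A" unfolding lift_def by blast

lemma graph_lift: assumes gA: "graph V A" shows "graph W (lift A)"
proof -
  have "lift A \<subseteq> {{x, y} |x y. x \<in> W \<and> y \<in> W \<and> x \<noteq> y}"
  proof
    fix e assume "e\<in>lift A"
    then consider "e\<in>F" | x y u v where "e = {x,y}" "{u,v}\<in>A" "u\<in>V" "v\<in>V" "x\<in>C u" "y\<in>C v"
      unfolding lift_def by blast
    then show "e \<in> {{x, y} |x y. x \<in> W \<and> y \<in> W \<and> x \<noteq> y}"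
    proof cases
      case 1 then show ?thesis using gH unfolding graph_def by blast
    next
      case 2 then have "u\<noteq>v" using edge_in[OF gA] by blast
      then have "x\<noteq>y" using disj 2 by blast
      then show ?thesis using 2 CW by blast
    qed
  qed
  then show ?thesis using gH unfolding graph_def by blast
qed

lemma lift_reflect: assumes gA: "graph V A" and EB: "E \<subseteq> B" and sub: "lift A \<subseteq> lift B" shows "A \<subseteq> B"
proof
  fix e assume eA: "e\<in>A"
  then obtain u v where e: "e = {u,v}" "u\<in>V" "v\<in>V" "u\<noteq>v" using gA unfolding graph_def by blast
  obtain x where x: "x\<in>C u" using ne e by blast
  obtain y where y: "y\<in>C v" using ne e by blast
  have "{x,y}\<in>lift A" unfolding lift_def using e eA x y by blast
  then have "{x,y}\<in>lift B" using sub by blast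
  then show "e\<in>B" using lift_char[OF EB e(2,3,4) x y] e by simp
qed

lemma lift_chordal: assumes gA: "graph V A" and EA: "E \<subseteq> A" and chA: "chordal V A"
  shows "chordal W (lift A)"
proof (rule ccontr)
  assume "\<not> chordal W (lift A)"
  then obtain xs where cyc: "induced_cycle W (lift A) xs" unfolding chordal_def by blast
  define L where "L = length xs"
  from cyc have L4: "4 \<le> L" and dx: "distinct xs" and sx: "set xs \<subseteq> W"
    and cc: "\<forall>i<L. \<forall>j<L. i \<noteq> j \<longrightarrow> ({xs!i, xs!j} \<in> lift A \<longleftrightarrow> (j = Suc i mod L \<or> i = Suc j mod L))"
    unfolding induced_cycle_def L_def by auto
  define cl where "cl x = (THE v. v\<in>V \<and> x\<in>C v)" for x
  have clp: "cl x \<in> V \<and> x \<in> C (cl x)" if xW0: "x\<in>W" for x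
  proof -
    obtain v where v: "v\<in>V" "x\<in>C v" using Wcls xW0 by blast
    then have "cl x = v" unfolding cl_def using cu by blast
    then show ?thesis using v by simp
  qed
  have xW: "xs!i \<in> W" if "i<L" for i using sx that L_def nth_mem by blast
  have xne: "xs!i \<noteq> xs!j" if "i<L" "j<L" "i\<noteq>j" for i j using dx that L_def nth_eq_iff_index_eq by metis
  have edgeF: "{xs!i,xs!j}\<in>lift A" if "i<L" "j<L" "i\<noteq>j" "cl(xs!i) = cl(xs!j)" for i j
  proof -
    have "{xs!i,xs!j}\<in>F" using clq clp[OF xW[OF that(1)]] clp[OF xW[OF that(2)]] xne[OF that(1-3)] that(4) by metis
    then show ?thesis using F_lift by blast
  qed
  have edgeX: "{xs!i,xs!j}\<in>lift A \<longleftrightarrow> {cl(xs!i), cl(xs!j)}\<in>A" if "i<L" "j<L" "cl(xs!i) \<noteq> cl(xs!j)" for i j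
    using lift_char[OF EA] clp xW that by blast
  have key: "False" if ij: "i<L" "j<L" "j = Suc i mod L" "cl(xs!i) = cl(xs!j)" for i j
  proof -
    define h where "h = (if i = 0 then L-1 else i-1)"
    have jf: "j = (if Suc i = L then 0 else Suc i)" using sucmod[OF ij(1)] ij(3) by simp
    have hL: "h<L" using L4 h_def ij by auto
    have hf: "Suc h mod L = (if Suc h = L then 0 else Suc h)" using sucmod[OF hL] .
    have jL': "Suc j mod L = (if Suc j = L then 0 else Suc j)" using sucmod[OF ij(2)] .
    have hi: "h\<noteq>i" "i = Suc h mod L" "h \<noteq> j" "j \<noteq> Suc h mod L" "h \<noteq> Suc j mod L"
      using L4 ij(1) jf hf jL' unfolding h_def by (auto split: if_splits)
    have e1: "{xs!h, xs!i}\<in>lift A" using cc hL ij hi by blast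
    have "{xs!h, xs!j}\<in>lift A"
    proof (cases "cl(xs!h) = cl(xs!i)")
      case True then show ?thesis using edgeF hL ij hi by metis
    next
      case False
      then have "{cl(xs!h), cl(xs!i)}\<in>A" using edgeX e1 hL ij by blast
      then show ?thesis using edgeX[of h j] False ij hL by simp
    qed
    then show False using cc hL ij hi by blast
  qed
  have cld: "cl(xs!i) \<noteq> cl(xs!j)" if "i<L" "j<L" "i\<noteq>j" for i j
  proof
    assume eq: "cl(xs!i) = cl(xs!j)"
    have "{xs!i,xs!j}\<in>lift A" using edgeF that eq by blast
    then have "j = Suc i mod L \<or> i = Suc j mod L" using cc that by blast
    then show False using key that eq by metis
  qed
  have "induced_cycle V A (map cl xs)"
    unfolding induced_cycle_def
  proof (intro conjI allI impI)
    show "4 \<le> length (map cl xs)" using L4 L_def by simp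
    show "distinct (map cl xs)" unfolding distinct_conv_nth using cld L_def by auto
    show "set (map cl xs) \<subseteq> V" using clp sx by auto
    fix i j assume "i < length (map cl xs)" "j < length (map cl xs)" "i\<noteq>j"
    then show "({map cl xs ! i, map cl xs ! j} \<in> A) = (j = Suc i mod length (map cl xs) \<or> i = Suc j mod length (map cl xs))"
      using edgeX cld cc L_def by auto
  qed
  then show False using chA unfolding chordal_def by blast
qed

lemma quoI: "u\<in>V \<Longrightarrow> v\<in>V \<Longrightarrow> u\<noteq>v \<Longrightarrow> \<forall>x\<in>C u. \<forall>y\<in>C v. {x,y}\<in>B \<Longrightarrow> {u,v}\<in>quo B"
  unfolding quo_def by blast

lemma quoD: assumes "{u,v}\<in>quo B" "x\<in>C u" "y\<in>C v" shows "{x,y}\<in>B"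
proof -
  obtain u' v' where uv: "{u,v} = {u',v'}" "\<forall>x\<in>C u'. \<forall>y\<in>C v'. {x,y}\<in>B"
    using assms(1) unfolding quo_def by blast
  from uv(1) have "(u=u' \<and> v=v') \<or> (u=v' \<and> v=u')" by (auto simp: doubleton_eq_iff)
  then show ?thesis using uv(2) assms by (auto simp: insert_commute)
qed

lemma graph_quo: "graph V (quo B)" using gG unfolding graph_def quo_def by blast

lemma E_quo: assumes "F \<subseteq> B" shows "E \<subseteq> quo B"
proof
  fix e assume "e\<in>E"
  then obtain u v where e: "e = {u,v}" "u\<in>V" "v\<in>V" "u\<noteq>v" using gG unfolding graph_def by blast
  then show "e \<in> quo B" using quoI cross assms \<open>e\<in>E\<close> by blast
qed

lemma lift_quo: assumes "F \<subseteq> B" shows "lift (quo B) \<subseteq> B"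
  unfolding lift_def using assms quoD by blast

end


context subst begin

lemma quo_chordal: assumes gB: "graph W B" and FB: "F \<subseteq> B" and chB: "chordal W B"
  shows "chordal V (quo B)"
proof (rule ccontr)
  assume "\<not> chordal V (quo B)"
  then obtain us where cyc: "induced_cycle V (quo B) us" unfolding chordal_def by blast
  define k where "k = length us"
  from cyc have k4: "4 \<le> k" and dus: "distinct us" and sus: "set us \<subseteq> V"
    and cc: "\<forall>i<k. \<forall>j<k. i \<noteq> j \<longrightarrow> ({us!i, us!j} \<in> quo B \<longleftrightarrow> (j = Suc i mod k \<or> i = Suc j mod k))"
    unfolding induced_cycle_def k_def by auto
  have usV: "us!i \<in> V" if "i<k" for i using sus that k_def nth_mem by blast
  have usne: "us!i \<noteq> us!j" if "i<k" "j<k" "i\<noteq>j" for i j using dus that k_def nth_eq_iff_index_eq by metis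
  have adj: "\<forall>x\<in>C(us!i). \<forall>y\<in>C(us!j). {x,y}\<in>B" if "i<k" "j<k" "j = Suc i mod k" for i j
  proof -
    have "i\<noteq>j" using that k4 sucmod[of i k] by (auto split: if_splits)
    then have "{us!i,us!j}\<in>quo B" using cc that by blast
    then show ?thesis using quoD by blast
  qed
  have nadj: "\<exists>x\<in>C(us!i). \<exists>y\<in>C(us!j). {x,y}\<notin>B"
    if "i<k" "j<k" "i\<noteq>j" "j \<noteq> Suc i mod k" "i \<noteq> Suc j mod k" for i j
  proof (rule ccontr)
    assume "\<not> ?thesis"
    then have "{us!i,us!j}\<in>quo B" using quoI[OF usV[OF that(1)] usV[OF that(2)] usne[OF that(1-3)]] by blast
    then show False using cc that by blast
  qed
  have s1: "Suc 0 mod k = 1" "Suc 1 mod k = 2" "Suc 2 mod k = 3" using k4 by auto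
  obtain x z where x: "x\<in>C(us!0)" and z: "z\<in>C(us!2)" and xz: "{x,z}\<notin>B"
    using nadj[of 0 2] k4 s1 by auto
  define K where "K = C(us!1)"
  have Kx: "{y,x}\<in>B" if "y\<in>K" for y using adj[of 0 1] k4 that x K_def s1 by (auto simp: insert_commute)
  have Kz: "{y,z}\<in>B" if "y\<in>K" for y using adj[of 1 2] k4 that z K_def s1 by auto
  have Kcl: "{y,y'}\<in>B" if "y\<in>K" "y'\<in>K" "y\<noteq>y'" for y y' using clq FB usV[of 1] k4 K_def that by auto
  have KW: "K \<subseteq> W" using CW usV[of 1] k4 K_def by auto
  have n1j: "\<exists>t\<in>C(us!j). \<exists>y\<in>K. {y,t}\<notin>B" if jj: "3 \<le> j" "j < k" for j
  proof -
    have "j \<noteq> Suc 1 mod k" using s1 jj by simp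
    moreover have "1 \<noteq> Suc j mod k" using jj sucmod[of j k] by auto
    moreover have "1 \<noteq> j" using jj by simp
    ultimately obtain y t where "y\<in>C(us!1)" "t\<in>C(us!j)" "{y,t}\<notin>B" using nadj[of 1 j] jj k4 by auto
    then show ?thesis unfolding K_def by blast
  qed
  define R where "R = {t. (\<exists>j. 3\<le>j \<and> j<k \<and> t\<in>C(us!j)) \<and> (\<exists>y\<in>K. {y,t}\<notin>B)}"
  define m where "m = k - 2"
  define cl where "cl i = us!((i+2) mod k)" for i
  define T where "T i = (SOME t. t\<in>C(cl i) \<and> (\<exists>y\<in>K. {y,t}\<notin>B))" for i
  define p0 where "p0 i = (if i=0 then z else if i = m then x else T i)" for i
  have Tp: "T i \<in> C(cl i) \<and> (\<exists>y\<in>K. {y,T i}\<notin>B)" if "0<i" "i<m" for i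
  proof -
    have "(i+2) mod k = i+2" "3 \<le> i+2" "i+2 < k" using that m_def by auto
    then have "\<exists>t. t\<in>C(cl i) \<and> (\<exists>y\<in>K. {y,t}\<notin>B)" using n1j[of "i+2"] cl_def by auto
    then show ?thesis unfolding T_def by (rule someI_ex)
  qed
  have p0C: "p0 i \<in> C(cl i)" if im: "i \<le> m" for i
  proof -
    consider "i=0" | "i=m" | "0<i \<and> i<m" using im by linarith
    then show ?thesis
    proof cases
      case 1 then show ?thesis using z k4 by (simp add: p0_def cl_def numeral_2_eq_2)
    next
      case 2
      have "m+2 = k" using k4 m_def by simp
      then have "(m+2) mod k = 0" by simp
      then show ?thesis using x 2 k4 m_def by (simp add: p0_def cl_def)
    next
      case 3 then show ?thesis using Tp[of i] by (simp add: p0_def)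
    qed
  qed
  have w0: "walk B p0 m z x R"
    unfolding walk_def
  proof (intro conjI allI impI)
    show "p0 0 = z" by (simp add: p0_def)
    show "p0 m = x" using k4 m_def by (simp add: p0_def)
    fix i
    { assume i: "i<m"
      have a: "(i+2) mod k < k" "(Suc i+2) mod k < k" using k4 by auto
      have b: "(Suc i + 2) mod k = Suc ((i+2) mod k) mod k" by (simp add: mod_Suc_eq)
      have "\<forall>x\<in>C(cl i). \<forall>y\<in>C(cl (Suc i)). {x,y}\<in>B" unfolding cl_def using adj[OF a b] .
      then show "{p0 i, p0 (Suc i)}\<in>B" using p0C i by simp }
    { assume i: "0<i \<and> i<m"
      then have "(i+2) mod k = i+2" "3 \<le> i + 2" "i+2 < k" using m_def by auto
      then have t1: "T i \<in> C(us!(i+2))" "\<exists>y\<in>K. {y,T i}\<notin>B" using Tp[of i] i cl_def by auto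
      have "p0 i = T i" using i by (simp add: p0_def)
      moreover have "T i \<in> R" unfolding R_def mem_Collect_eq using t1 \<open>3 \<le> i+2\<close> \<open>i+2<k\<close> by blast
      ultimately show "p0 i \<in> R" by simp }
  qed
  define n where "n = (LEAST n. \<exists>p. walk B p n z x R)"
  have "\<exists>p. walk B p n z x R" unfolding n_def by (rule LeastI_ex) (use w0 in blast)
  then obtain p where wp: "walk B p n z x R" by blast
  have mn: "\<forall>n'<n. \<not>(\<exists>q. walk B q n' z x R)" unfolding n_def using not_less_Least[where P="\<lambda>n. \<exists>p. walk B p n z x R"] by blast
  note chl = min_walk(1)[OF wp mn] and dis = min_walk(2)[OF wp mn]
  have p0z: "p 0 = z" and pnx: "p n = x" and pcons: "\<forall>i<n. {p i,p(Suc i)}\<in>B"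
    and pR: "\<forall>i. 0<i \<and> i<n \<longrightarrow> p i \<in> R" using wp unfolding walk_def by auto
  have zK: "z\<notin>K"
  proof
    assume "z\<in>K" then have "us!2 = us!1" using cu usV k4 z K_def by auto
    then show False using usne k4 by auto
  qed
  have xK: "x\<notin>K"
  proof
    assume "x\<in>K" then have "us!0 = us!1" using cu usV k4 x K_def by auto
    then show False using usne k4 by auto
  qed
  have RK: "t\<notin>K" if "t\<in>R" for t
  proof
    assume tK: "t\<in>K"
    from that obtain j where j: "3\<le>j" "j<k" "t\<in>C(us!j)" unfolding R_def by blast
    then have "us!j = us!1" using cu usV tK K_def k4 by auto
    then show False using usne j k4 by auto
  qed
  have RW: "R \<subseteq> W" using CW usV unfolding R_def by blast
  have xW: "x\<in>W" using CW[OF usV[of 0] x] k4 by simp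
  have zW: "z\<in>W" using CW[OF usV[of 2] z] k4 by simp
  have pK: "p i \<notin> K" if "i\<le>n" for i
    using that p0z pnx pR RK xK zK by (cases "i=0"; cases "i=n") auto
  have pW: "p i \<in> W" if "i\<le>n" for i
    using that p0z pnx pR RW xW zW by (cases "i=0"; cases "i=n") auto
  have n2: "2 \<le> n"
  proof (rule ccontr)
    assume "\<not> 2\<le>n" then consider "n=0" | "n=1" by linarith
    then show False
    proof cases
      case 1
      then have "x = z" using p0z pnx by simp
      then have "us!0 = us!2" using cu usV k4 x z by auto
      then show False using usne k4 by auto
    next
      case 2
      then have "{z,x}\<in>B" using pcons p0z pnx by auto
      then show False using xz by (simp add: insert_commute)
    qed
  qed
  have pint: "\<exists>y\<in>K. {y, p i}\<notin>B" if "0<i" "i<n" for i using pR R_def that by blast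
  have ex0: "\<forall>y\<in>K. {y, p 0}\<in>B \<and> {y,p n}\<in>B" using Kx Kz p0z pnx by auto
  have yn: "\<forall>i. 0\<le>i \<and> i\<le>e \<longrightarrow> p i \<noteq> y" if "y\<in>K" "e \<le> n" for y e using pK that by auto
  have pWe: "\<forall>i. s\<le>i \<and> i\<le>e \<longrightarrow> p i \<in> W" if "e \<le> n" for s e using pW that by auto
  have conse: "\<forall>i. s \<le> i \<and> i < e \<longrightarrow> {p i, p (Suc i)} \<in> B" if "e \<le> n" for s e using pcons that by auto
  have chle: "\<forall>i j. s \<le> i \<and> Suc i < j \<and> j \<le> e \<longrightarrow> {p i, p j}\<notin>B" if "e \<le> n" for s e using chl that by auto
  have dise: "\<forall>i j. s\<le>i \<and> i<j \<and> j\<le>e \<longrightarrow> p i \<noteq> p j" if "e \<le> n" for s e using dis that by auto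
  obtain y1 where y1: "y1\<in>K" "{y1,p 1}\<notin>B" using pint[of 1] n2 by auto
  define i where "i = (LEAST i. 1 \<le> i \<and> {y1, p i}\<in>B)"
  have ex: "1 \<le> n \<and> {y1,p n}\<in>B" using ex0 y1 n2 by auto
  have i1: "1 \<le> i \<and> {y1, p i}\<in>B" unfolding i_def by (rule LeastI) (rule ex)
  have iln: "i \<le> n" unfolding i_def by (rule Least_le) (rule ex)
  have ib: "{y1,p l}\<notin>B" if "1\<le>l" "l<i" for l
    using not_less_Least[of l "\<lambda>i. 1 \<le> i \<and> {y1,p i}\<in>B"] that unfolding i_def by blast
  have i2: "i \<noteq> 1" using i1 y1 by auto
  show False
  proof (cases "i = n")
    case True
    show False
    proof (rule cycE[OF chB, of 0 n p y1])
      show "\<forall>i. 0\<le>i \<and> i \<le> n \<longrightarrow> p i \<in> W" by (rule pWe) simp_all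
      show "y1 \<in> W" using KW y1 by auto
      show "\<forall>i. 0 \<le> i \<and> i < n \<longrightarrow> {p i, p (Suc i)} \<in> B" by (rule conse) simp_all
      show "\<forall>i j. 0 \<le> i \<and> Suc i < j \<and> j \<le> n \<longrightarrow> {p i, p j}\<notin>B" by (rule chle) simp_all
      show "\<forall>i j. 0\<le>i \<and> i<j \<and> j\<le>n \<longrightarrow> p i \<noteq> p j" by (rule dise) simp_all
      show "\<forall>i. 0\<le>i \<and> i\<le>n \<longrightarrow> p i \<noteq> y1" by (rule yn) (use y1 in simp_all)
      show "{y1, p 0}\<in>B" "{y1,p n}\<in>B" using ex0 y1 by auto
      show "\<forall>i. 0<i \<and> i<n \<longrightarrow> {y1,p i}\<notin>B" using ib True by auto
      show "0+2 \<le> n" using n2 by simp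
    qed
  next
    case False
    then have iln': "i<n" using iln by simp
    obtain y2 where y2: "y2\<in>K" "{y2,p i}\<notin>B" using pint[of i] i1 iln' by auto
    have y12: "y1\<noteq>y2" using y2 i1 by auto
    have y12e: "{y1,y2}\<in>B" using Kcl y1 y2 y12 by auto
    define S where "S = {j. j<i \<and> {y2,p j}\<in>B}"
    have S0: "0\<in>S" using ex0 y2 i1 S_def by auto
    have fS: "finite S" unfolding S_def by auto
    define j where "j = Max S"
    have jS: "j\<in>S" using Max_in fS S0 j_def by blast
    have jmax: "l \<le> j" if "l\<in>S" for l using Max_ge fS that j_def by blast
    have jb: "{y2,p l}\<notin>B" if "j<l" "l \<le> i" for l
    proof (cases "l = i")
      case True then show ?thesis using y2 by simp
    next
      case False then show ?thesis using that jmax[of l] S_def by auto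
    qed
    have ji: "j < i" using jS S_def by auto
    show False
    proof (cases "j = 0")
      case False
      show False
      proof (rule cycF[OF chB, of j i p y1 y2])
        show "\<forall>l. j\<le>l \<and> l \<le> i \<longrightarrow> p l \<in> W" by (rule pWe) (use iln in simp_all)
        show "y1 \<in> W" "y2\<in>W" using KW y1 y2 by auto
        show "\<forall>l. j \<le> l \<and> l < i \<longrightarrow> {p l, p (Suc l)} \<in> B" by (rule conse) (use iln in simp_all)
        show "\<forall>a b. j \<le> a \<and> Suc a < b \<and> b \<le> i \<longrightarrow> {p a, p b}\<notin>B" by (rule chle) (use iln in simp_all)
        show "\<forall>a b. j\<le>a \<and> a<b \<and> b\<le>i \<longrightarrow> p a \<noteq> p b" by (rule dise) (use iln in simp_all)
        show "\<forall>l. j\<le>l \<and> l\<le>i \<longrightarrow> p l \<noteq> y1" "\<forall>l. j\<le>l \<and> l\<le>i \<longrightarrow> p l \<noteq> y2"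
          using pK y1 y2 iln by fastforce+
        show "{y2, p j}\<in>B" using jS S_def by auto
        show "\<forall>l. j<l \<and> l\<le>i \<longrightarrow> {y2,p l}\<notin>B" using jb by auto
        show "{y1, p i}\<in>B" using i1 by auto
        show "\<forall>l. j\<le>l \<and> l<i \<longrightarrow> {y1,p l}\<notin>B" using ib False by auto
        show "{y1,y2}\<in>B" "y1 \<noteq> y2" using y12e y12 by auto
        show "j+1 \<le> i" using ji by simp
      qed
    next
      case True
      define l0 where "l0 = (LEAST l. i<l \<and> {y2,p l}\<in>B)"
      have ex2: "i<n \<and> {y2,p n}\<in>B" using ex0 y2 iln' by auto
      have l0p: "i<l0 \<and> {y2,p l0}\<in>B" unfolding l0_def by (rule LeastI) (rule ex2)
      have l0n: "l0 \<le> n" unfolding l0_def by (rule Least_le) (rule ex2)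
      have l0b: "{y2,p l}\<notin>B" if "i<l" "l<l0" for l
        using not_less_Least[of l "\<lambda>l. i<l \<and> {y2,p l}\<in>B"] that unfolding l0_def by blast
      show False
      proof (rule cycE[OF chB, of 0 l0 p y2])
        show "\<forall>l. 0\<le>l \<and> l \<le> l0 \<longrightarrow> p l \<in> W" by (rule pWe) (use l0n in simp_all)
        show "y2 \<in> W" using KW y2 by auto
        show "\<forall>l. 0 \<le> l \<and> l < l0 \<longrightarrow> {p l, p (Suc l)} \<in> B" by (rule conse) (use l0n in simp_all)
        show "\<forall>a b. 0 \<le> a \<and> Suc a < b \<and> b \<le> l0 \<longrightarrow> {p a, p b}\<notin>B" by (rule chle) (use l0n in simp_all)
        show "\<forall>a b. 0\<le>a \<and> a<b \<and> b\<le>l0 \<longrightarrow> p a \<noteq> p b" by (rule dise) (use l0n in simp_all)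
        show "\<forall>l. 0\<le>l \<and> l\<le>l0 \<longrightarrow> p l \<noteq> y2" by (rule yn) (use y2 l0n in simp_all)
        show "{y2, p 0}\<in>B" using ex0 y2 by auto
        show "{y2,p l0}\<in>B" using l0p by auto
        show "\<forall>l. 0<l \<and> l<l0 \<longrightarrow> {y2,p l}\<notin>B"
        proof (intro allI impI)
          fix l assume l: "0<l \<and> l<l0"
          show "{y2,p l}\<notin>B"
          proof (cases "l \<le> i")
            case True then show ?thesis using jb l \<open>j=0\<close> by auto
          next
            case False then show ?thesis using l0b l by auto
          qed
        qed
        show "0+2 \<le> l0" using l0p i1 i2 by auto
      qed
    qed
  qed
qed

lemma cc_lift: "chordal_completion V E A \<Longrightarrow> chordal_completion W F (lift A)"
  unfolding chordal_completion_def using graph_lift F_lift lift_chordal by blast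

lemma cc_quo: "chordal_completion W F B \<Longrightarrow> chordal_completion V E (quo B)"
  unfolding chordal_completion_def using graph_quo E_quo quo_chordal by blast

lemma min_lift: assumes "minimal_chordal_completion V E A"
  shows "minimal_chordal_completion W F (lift A)"
proof -
  have ccA: "chordal_completion V E A" and mA: "\<not> (\<exists>A''. chordal_completion V E A'' \<and> A'' \<subset> A)"
    using assms unfolding minimal_chordal_completion_def by auto
  have "\<not> (\<exists>B. chordal_completion W F B \<and> B \<subset> lift A)"
  proof
    assume "\<exists>B. chordal_completion W F B \<and> B \<subset> lift A"
    then obtain B where ccB: "chordal_completion W F B" and BA: "B \<subset> lift A" by blast
    have ccq: "chordal_completion V E (quo B)" using cc_quo[OF ccB] .
    have lq: "lift (quo B) \<subseteq> B" using lift_quo ccB unfolding chordal_completion_def by blast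
    have "quo B \<subseteq> A" using lift_reflect[OF graph_quo] ccA lq BA unfolding chordal_completion_def by blast
    then have "quo B = A" using mA ccq by blast
    then show False using lq BA by blast
  qed
  then show ?thesis using cc_lift[OF ccA] unfolding minimal_chordal_completion_def by blast
qed

lemma min_surj: assumes "minimal_chordal_completion W F B"
  shows "\<exists>A. minimal_chordal_completion V E A \<and> B = lift A"
proof -
  have ccB: "chordal_completion W F B" and mB: "\<not> (\<exists>B''. chordal_completion W F B'' \<and> B'' \<subset> B)"
    using assms unfolding minimal_chordal_completion_def by auto
  define A where "A = quo B"
  have ccA: "chordal_completion V E A" using cc_quo[OF ccB] A_def by simp
  have lq: "lift A \<subseteq> B" using lift_quo ccB A_def unfolding chordal_completion_def by blast
  have eq: "lift A = B" using cc_lift[OF ccA] lq mB by blast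
  have "\<not> (\<exists>A''. chordal_completion V E A'' \<and> A'' \<subset> A)"
  proof
    assume "\<exists>A''. chordal_completion V E A'' \<and> A'' \<subset> A"
    then obtain A'' where cc'': "chordal_completion V E A''" and sub: "A'' \<subset> A" by blast
    have "lift A'' \<subseteq> B" using lift_mono[of A'' A] sub eq by blast
    then have "lift A'' = B" using cc_lift[OF cc''] mB by blast
    then have "A \<subseteq> A''" using lift_reflect[of A A''] ccA cc'' eq unfolding chordal_completion_def by blast
    then show False using sub by blast
  qed
  then show ?thesis using ccA eq unfolding minimal_chordal_completion_def by blast
qed

lemma main: "\<exists>\<phi>. bij_betw \<phi> {E'. minimal_chordal_completion V E E'} {F'. minimal_chordal_completion W F F'}"
proof (intro exI)
  show "bij_betw lift {E'. minimal_chordal_completion V E E'} {F'. minimal_chordal_completion W F F'}"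
    unfolding bij_betw_def
  proof (intro conjI)
    show "inj_on lift {E'. minimal_chordal_completion V E E'}"
    proof (rule inj_onI)
      fix A A' assume A: "A \<in> {E'. minimal_chordal_completion V E E'}" and A': "A' \<in> {E'. minimal_chordal_completion V E E'}"
        and eq: "lift A = lift A'"
      have "A \<subseteq> A'" "A' \<subseteq> A" using lift_reflect A A' eq
        unfolding minimal_chordal_completion_def chordal_completion_def by auto
      then show "A = A'" by blast
    qed
    show "lift ` {E'. minimal_chordal_completion V E E'} = {F'. minimal_chordal_completion W F F'}"
      using min_lift min_surj by blast
  qed
qed

end


theorem lemma3:
  fixes V :: "'a set" and E :: "'a set set"
    and W :: "'b set" and F :: "'b set set" and C :: "'a \<Rightarrow> 'b set"
  assumes "graph V E" and "graph W F"
    and "\<forall>v\<in>V. C v \<noteq> {}"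
    and "\<Union> (C ` V) = W"
    and "\<forall>u\<in>V. \<forall>v\<in>V. u \<noteq> v \<longrightarrow> C u \<inter> C v = {}"
    and "\<forall>v\<in>V. \<forall>x\<in>C v. \<forall>y\<in>C v. x \<noteq> y \<longrightarrow> {x, y} \<in> F"
    and "\<forall>u\<in>V. \<forall>v\<in>V. u \<noteq> v \<longrightarrow>
           (\<forall>x\<in>C u. \<forall>y\<in>C v. {x, y} \<in> F \<longleftrightarrow> {u, v} \<in> E)"
  shows "\<exists>\<phi>. bij_betw \<phi> {E'. minimal_chordal_completion V E E'}
                         {F'. minimal_chordal_completion W F F'}"
  using assms by (rule subst.main[OF subst.intro])

end
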